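(* Let $L$ be a subspace of $\bigwedge^{k}V$ and let $h\in[n]$. Suppose $L$ is monomial with respect to $e_h$, i.e. $L=\big(L\cap\bigwedge^{k}V^{(h)}\big)\oplus\big(L\cap(e_{h}\wedge\bigwedge^{k-1}V^{(h)})\big)$. If $1\leq i<j\leq n$ are distinct from $h$, then \begin{align*} N_{j\to i}L & =N_{j\to i}\Big(L\cap\bigwedge^{k}V^{(h)}\Big)\oplus N_{j\to i}\Big(L\cap\big(e_{h}\wedge\bigwedge^{k-1}V^{(h)}\big)\Big)\\ & =\Big(N_{j\to i}L\cap\bigwedge^{k}V^{(h)}\Big)\oplus\Big(N_{j\to i}L\cap\big(e_{h}\wedge\bigwedge^{k-1}V^{(h)}\big)\Big). \end{align*}
   Context: $\mathbb{F}$ is a field (assumed throughout the paper, for expository purposes, to have characteristic not $2$), $V$ is an $n$-dimensional $\mathbb{F}$-vector space with a fixed basis $e_1,\dots,e_n$, and $\bigwedge V$ its exterior algebra. For $j\in[n]$, $V^{(j)}$ is the span of $\{e_l:l\neq j\}$, and $\bigwedge V^{(j)}$ is viewed as a subalgebra of $\bigwedge V$. Slow shift: for distinct $i,j\in[n]$ and nonzero $m\in\bigwedge^kV$, write uniquely $m=x+e_j\wedge y$ with $x\in\bigwedge^kV^{(j)}$, $y\in\bigwedge^{k-1}V^{(j)}$, and set $N_{j\to i}m=x+e_i\wedge y$ if this is nonzero, and $N_{j\to i}m=e_j\wedge y$ otherwise (the limit as $t\to0$ of the projective action of the linear map $e_j\mapsto e_i+te_j$ fixing the other $e_l$). For a subspace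 $L$ of $\bigwedge^kV$, $N_{j\to i}L$ is the span of $\{N_{j\to i}m:m\in L\setminus\{0\}\}$ (and $N_{j\to i}\{0\}=\{0\}$); it has the same dimension as $L$. *)

theory Defs
  imports Complex_Main "HOL-Library.Function_Algebras"
begin

text \<open>Exterior algebra of V = F^n with basis e_1,...,e_n, in coordinates:
  an element is a function from index sets S (subsets of {1..n}) to coefficients,
  m = sum over S of m(S) e_S, where e_S = e_{s1} wedge ... wedge e_{sr}, s1 < ... < sr.\<close>

type_synonym 'a ext = "nat set \<Rightarrow> 'a"

definition esc :: "'a::field \<Rightarrow> 'a ext \<Rightarrow> 'a ext" where
  "esc c m = (\<lambda>S. c * m S)"

text \<open>Sign of e_S wedge e_T = sgn_pair S T * e_(S union T) for disjoint S, T.\<close>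
definition sgn_pair :: "nat set \<Rightarrow> nat set \<Rightarrow> 'a::field" where
  "sgn_pair S T = (-1) ^ card {(s, t). s \<in> S \<and> t \<in> T \<and> t < s}"

definition ewedge :: "'a::field ext \<Rightarrow> 'a ext \<Rightarrow> 'a ext" where
  "ewedge f g = (\<lambda>U. if finite U then (\<Sum>S\<in>Pow U. sgn_pair S (U - S) * f S * g (U - S)) else 0)"

definition ebasis :: "nat set \<Rightarrow> 'a::field ext" where
  "ebasis S = (\<lambda>T. if T = S then 1 else 0)"

text \<open>The k-th exterior power of V, and of V^(j) = span {e_l : l \<noteq> j}.\<close>
definition ext_pow :: "nat \<Rightarrow> nat \<Rightarrow> 'a::field ext set" where
  "ext_pow n k = {m. \<forall>S. m S \<noteq> 0 \<longrightarrow> finite S \<and> S \<subseteq> {1..n} \<and> card S = k}"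

definition ext_pow_off :: "nat \<Rightarrow> nat \<Rightarrow> nat \<Rightarrow> 'a::field ext set" where
  "ext_pow_off n k j = {m \<in> ext_pow n k. \<forall>S. m S \<noteq> 0 \<longrightarrow> j \<notin> S}"

definition ext_pow_with :: "nat \<Rightarrow> nat \<Rightarrow> nat \<Rightarrow> 'a::field ext set" where
  "ext_pow_with n k h = {ewedge (ebasis {h}) y | y. y \<in> ext_pow_off n (k - 1) h}"

definition esubspace :: "'a::field ext set \<Rightarrow> bool" where
  "esubspace L = module.subspace esc L"

definition espan :: "'a::field ext set \<Rightarrow> 'a ext set" where
  "espan X = module.span esc X"

definition is_dsum :: "'a::field ext set \<Rightarrow> 'a ext set \<Rightarrow> 'a ext set \<Rightarrow> bool" where
  "is_dsum C A B \<longleftrightarrow> C = {a + b | a b. a \<in> A \<and> b \<in> B} \<and> A \<inter> B = {0}"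

definition decomp :: "nat \<Rightarrow> nat \<Rightarrow> nat \<Rightarrow> 'a::field ext \<Rightarrow> 'a ext \<times> 'a ext" where
  "decomp n k j m = (THE (x, y). x \<in> ext_pow_off n k j \<and> y \<in> ext_pow_off n (k - 1) j
                                 \<and> m = x + ewedge (ebasis {j}) y)"

definition slow_shift_el :: "nat \<Rightarrow> nat \<Rightarrow> nat \<Rightarrow> nat \<Rightarrow> 'a::field ext \<Rightarrow> 'a ext" where
  "slow_shift_el n k j i m =
     (let (x, y) = decomp n k j m; z = x + ewedge (ebasis {i}) y
      in if z \<noteq> 0 then z else ewedge (ebasis {j}) y)"

text \<open>Slow shift of a subspace: span of the shifts of its nonzero elements
  (the span of the empty set is {0}, so N {0} = {0}).\<close>
definition slow_shift :: "nat \<Rightarrow> nat \<Rightarrow> nat \<Rightarrow> nat \<Rightarrow> 'a::field ext set \<Rightarrow> 'a ext set" where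
  "slow_shift n k j i L = espan (slow_shift_el n k j i ` (L - {0}))"

end

theory Submission imports Defs begin

lemma module_esc: "module (esc :: 'a::field \<Rightarrow> 'a ext \<Rightarrow> 'a ext)"
  by unfold_locales (auto simp: esc_def fun_eq_iff algebra_simps)

interpretation E: module "esc :: 'a::field \<Rightarrow> 'a ext \<Rightarrow> 'a ext"
  by (rule module_esc)

definition wed :: "nat \<Rightarrow> 'a::field ext \<Rightarrow> 'a ext" where
  "wed i y = (\<lambda>U. if finite U \<and> i \<in> U then sgn_pair {i} (U - {i}) * y (U - {i}) else 0)"

definition offp :: "nat \<Rightarrow> 'a::field ext \<Rightarrow> 'a ext" where
  "offp j m = (\<lambda>S. if j \<in> S then 0 else m S)"

definition yp :: "nat \<Rightarrow> 'a::field ext \<Rightarrow> 'a ext" where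
  "yp j m = (\<lambda>T. if j \<in> T then 0 else sgn_pair {j} T * m (insert j T))"

lemma ewedge_basis: "ewedge (ebasis {i}) y = wed i y"
proof (rule ext)
  fix U :: "nat set"
  show "ewedge (ebasis {i}) y U = wed i y U"
  proof (cases "finite U")
    case True
    have "(\<Sum>S\<in>Pow U. sgn_pair S (U - S) * ebasis {i} S * y (U - S))
        = (\<Sum>S\<in>Pow U. if S = {i} then sgn_pair {i} (U - {i}) * y (U - {i}) else 0)"
      by (rule sum.cong) (auto simp: ebasis_def)
    also have "\<dots> = (if i \<in> U then sgn_pair {i} (U - {i}) * y (U - {i}) else 0)"
      using True by (subst sum.delta) auto
    finally show ?thesis using True by (simp add: ewedge_def wed_def)
  qed (simp add: ewedge_def wed_def)
qed

lemma sgn_sq: "sgn_pair A B * (sgn_pair A B :: 'a::field) = 1"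
proof -
  have "((-1::'a) ^ c) * (-1) ^ c = 1" for c
    by (metis power_mult_distrib mult_minus_left mult_minus_right mult_1_left minus_minus power_one)
  then show ?thesis by (simp add: sgn_pair_def)
qed

lemma sgn_nz: "sgn_pair A B \<noteq> (0 :: 'a::field)"
proof
  assume "sgn_pair A B = (0::'a)"
  then have "sgn_pair A B * sgn_pair A B = (0::'a)" by simp
  with sgn_sq[of A B, where 'a='a] show False by simp
qed

lemma ext_powD: "m \<in> ext_pow n k \<Longrightarrow> m S \<noteq> 0 \<Longrightarrow> finite S \<and> S \<subseteq> {1..n} \<and> card S = k"
  by (auto simp: ext_pow_def)

lemma decomp_ex:
  assumes "m \<in> ext_pow n k"
  shows "m = offp j m + wed j (yp j m)"
proof (rule ext)
  fix U :: "nat set"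
  show "m U = (offp j m + wed j (yp j m)) U"
  proof (cases "j \<in> U")
    case False then show ?thesis by (simp add: offp_def wed_def)
  next
    case True
    show ?thesis
    proof (cases "finite U")
      case False
      then have "m U = 0" using ext_powD[OF assms] by blast
      then show ?thesis using False by (simp add: offp_def wed_def)
    next
      case fin: True
      have "insert j (U - {j}) = U" using True by auto
      then show ?thesis using True fin sgn_sq[of "{j}" "U - {j}", where 'a='a]
        by (simp add: offp_def wed_def yp_def mult.assoc[symmetric])
    qed
  qed
qed

lemma offp_in: "m \<in> ext_pow n k \<Longrightarrow> offp j m \<in> ext_pow_off n k j"
  by (auto simp: ext_pow_off_def ext_pow_def offp_def split: if_splits)

lemma yp_in: assumes "m \<in> ext_pow n k" shows "yp j m \<in> ext_pow_off n (k - 1) j"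
proof -
  have "finite T \<and> T \<subseteq> {1..n} \<and> card T = k - 1 \<and> j \<notin> T" if "yp j m T \<noteq> 0" for T
  proof -
    have j: "j \<notin> T" and m: "m (insert j T) \<noteq> 0" using that by (auto simp: yp_def split: if_splits)
    from ext_powD[OF assms m] j show ?thesis by auto
  qed
  then show ?thesis by (auto simp: ext_pow_off_def ext_pow_def)
qed

lemma off_zero: "x \<in> ext_pow_off n k j \<Longrightarrow> j \<in> S \<Longrightarrow> x S = 0"
  unfolding ext_pow_off_def by blast
lemma off_inf: "x \<in> ext_pow_off n k j \<Longrightarrow> infinite S \<Longrightarrow> x S = 0"
  unfolding ext_pow_off_def ext_pow_def by blast

lemma decomp_uniq:
  assumes x: "x \<in> ext_pow_off n k j" and x': "x' \<in> ext_pow_off n k j"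
    and y: "y \<in> ext_pow_off n k' j" and y': "y' \<in> ext_pow_off n k' j"
    and eq: "x + wed j y = x' + wed j y'"
  shows "x = x' \<and> y = y'"
proof
  show "x = x'"
  proof (rule ext)
    fix S show "x S = x' S"
    proof (cases "j \<in> S")
      case True then show ?thesis using off_zero[OF x] off_zero[OF x'] by simp
    next
      case False
      have "(x + wed j y) S = (x' + wed j y') S" using eq by simp
      then show ?thesis using False by (simp add: wed_def)
    qed
  qed
  show "y = y'"
  proof (rule ext)
    fix T show "y T = y' T"
    proof (cases "j \<notin> T \<and> finite T")
      case False
      then have "j \<in> T \<or> infinite T" by blast
      then show ?thesis using off_zero[OF y] off_zero[OF y'] off_inf[OF y] off_inf[OF y'] by metis
    next
      case True
      have "(x + wed j y) (insert j T) = (x' + wed j y') (insert j T)" using eq by simp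
      moreover have "x (insert j T) = 0" "x' (insert j T) = 0" using off_zero[OF x] off_zero[OF x'] by simp_all
      moreover have "insert j T - {j} = T" using True by auto
      ultimately have "sgn_pair {j} T * y T = sgn_pair {j} T * y' T" using True by (simp add: wed_def)
      then show ?thesis using sgn_nz[of "{j}" T, where 'a='a] by simp
    qed
  qed
qed

lemma decomp_eq:
  assumes "m \<in> ext_pow n k"
  shows "decomp n k j m = (offp j m, yp j m)"
  unfolding decomp_def
proof (rule the_equality)
  show "case (offp j m, yp j m) of (x, y) \<Rightarrow> x \<in> ext_pow_off n k j \<and> y \<in> ext_pow_off n (k - 1) j \<and> m = x + ewedge (ebasis {j}) y"
    using offp_in[OF assms] yp_in[OF assms] decomp_ex[OF assms] by (simp add: ewedge_basis)
  fix p assume "case p of (x, y) \<Rightarrow> x \<in> ext_pow_off n k j \<and> y \<in> ext_pow_off n (k - 1) j \<and> m = x + ewedge (ebasis {j}) y"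
  then obtain x y where p: "p = (x, y)" and h: "x \<in> ext_pow_off n k j" "y \<in> ext_pow_off n (k - 1) j" "m = x + wed j y"
    by (auto simp: ewedge_basis)
  have "x = offp j m \<and> y = yp j m"
    by (rule decomp_uniq[OF h(1) offp_in[OF assms] h(2) yp_in[OF assms]]) (metis h(3) decomp_ex[OF assms])
  then show "p = (offp j m, yp j m)" using p by simp
qed

definition PP :: "nat \<Rightarrow> nat \<Rightarrow> 'a::field ext \<Rightarrow> 'a ext" where
  "PP j i m = offp j m + wed i (yp j m)"

lemma sse_eq: "m \<in> ext_pow n k \<Longrightarrow>
  slow_shift_el n k j i m = (if PP j i m \<noteq> 0 then PP j i m else wed j (yp j m))"
  unfolding slow_shift_el_def PP_def ewedge_basis by (subst decomp_eq) (simp_all only: Let_def prod.case)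

lemma nz_add: "(x::'a::monoid_add) + y \<noteq> 0 \<Longrightarrow> x \<noteq> 0 \<or> y \<noteq> 0"
  by auto

definition offh :: "nat \<Rightarrow> 'a::field ext \<Rightarrow> bool" where
  "offh h X = (\<forall>S. X S \<noteq> 0 \<longrightarrow> h \<notin> S)"
definition onh :: "nat \<Rightarrow> 'a::field ext \<Rightarrow> bool" where
  "onh h X = (\<forall>S. X S \<noteq> 0 \<longrightarrow> h \<in> S)"

lemma offh_offp: "offh h m \<Longrightarrow> offh h (offp j m)"
  by (auto simp: offh_def offp_def)
lemma onh_offp: "onh h m \<Longrightarrow> onh h (offp j m)"
  by (auto simp: onh_def offp_def)
lemma offh_yp: "offh h m \<Longrightarrow> h \<noteq> j \<Longrightarrow> offh h (yp j m)"
  by (auto simp: offh_def yp_def split: if_splits)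
lemma onh_yp: assumes "onh h m" "h \<noteq> j" shows "onh h (yp j m)"
  unfolding onh_def
proof (intro allI impI)
  fix T assume "yp j m T \<noteq> 0"
  then have "m (insert j T) \<noteq> 0" by (auto simp: yp_def split: if_splits)
  then have "h \<in> insert j T" using assms(1) unfolding onh_def by blast
  then show "h \<in> T" using assms(2) by simp
qed
lemma offh_wed: "offh h y \<Longrightarrow> h \<noteq> i \<Longrightarrow> offh h (wed i y)"
  by (auto simp: offh_def wed_def split: if_splits)
lemma onh_wed: assumes "onh h y" shows "onh h (wed i y)"
  unfolding onh_def
proof (intro allI impI)
  fix U assume "wed i y U \<noteq> 0"
  then have "y (U - {i}) \<noteq> 0" by (auto simp: wed_def split: if_splits)
  then have "h \<in> U - {i}" using assms(1) unfolding onh_def by blast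
  then show "h \<in> U" by simp
qed
lemma onh_wed_h: "onh h (wed h y)"
  by (auto simp: onh_def wed_def split: if_splits)
lemma offh_add: "offh h a \<Longrightarrow> offh h b \<Longrightarrow> offh h (a + b)"
  by (auto simp: offh_def dest!: nz_add)
lemma onh_add: "onh h a \<Longrightarrow> onh h b \<Longrightarrow> onh h (a + b)"
  by (auto simp: onh_def dest!: nz_add)
lemma offh_esc: "offh h a \<Longrightarrow> offh h (esc c a)"
  by (auto simp: offh_def esc_def)
lemma onh_esc: "onh h a \<Longrightarrow> onh h (esc c a)"
  by (auto simp: onh_def esc_def)
lemma offh_onh: "offh h a \<Longrightarrow> onh h a \<Longrightarrow> a = 0"
  by (auto simp: offh_def onh_def fun_eq_iff)

lemma ep_add: "a \<in> ext_pow n k \<Longrightarrow> b \<in> ext_pow n k \<Longrightarrow> a + b \<in> ext_pow n k"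
  by (auto simp: ext_pow_def dest!: nz_add)
lemma ep_esc: "a \<in> ext_pow n k \<Longrightarrow> esc c a \<in> ext_pow n k"
  by (auto simp: ext_pow_def esc_def)
lemma ep_zero: "0 \<in> ext_pow n k"
  by (auto simp: ext_pow_def)
lemma ep_offp: "m \<in> ext_pow n k \<Longrightarrow> offp j m \<in> ext_pow n k"
  by (auto simp: ext_pow_def offp_def)
lemma ep_wed:
  assumes m: "m \<in> ext_pow n k" and i: "i \<in> {1..n}"
  shows "wed i (yp j m) \<in> ext_pow n k"
proof -
  have "finite U \<and> U \<subseteq> {1..n} \<and> card U = k" if nz: "wed i (yp j m) U \<noteq> 0" for U
  proof -
    have fin: "finite U" and iU: "i \<in> U" and jn: "j \<notin> U - {i}"
      and mnz: "m (insert j (U - {i})) \<noteq> 0"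
      using nz by (auto simp: wed_def yp_def split: if_splits)
    from ext_powD[OF m mnz] have a: "U - {i} \<subseteq> {1..n}" "card (insert j (U - {i})) = k" by auto
    have "card (insert j (U - {i})) = Suc (card (U - {i}))" using fin jn by simp
    moreover have "card U = Suc (card (U - {i}))" using card_Suc_Diff1[OF fin iU] by simp
    ultimately have c: "card U = k" using a(2) by simp
    have "U \<subseteq> {1..n}" using a(1) i by blast
    then show ?thesis using fin c by blast
  qed
  then show ?thesis by (auto simp: ext_pow_def)
qed

lemma offp_add: "offp j (a + b) = offp j a + offp j b"
  by (auto simp: offp_def fun_eq_iff)
lemma yp_add: "yp j (a + b) = yp j a + yp j b"
  by (auto simp: yp_def fun_eq_iff algebra_simps)
lemma wed_add: "wed i (a + b) = wed i a + wed i b"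
  by (auto simp: wed_def fun_eq_iff algebra_simps)
lemma PP_add: "PP j i (a + b) = PP j i a + PP j i b"
  by (simp add: PP_def offp_add yp_add wed_add algebra_simps)
lemma Q_add: "wed j (yp j (a + b)) = wed j (yp j a) + wed j (yp j b)"
  unfolding yp_add wed_add ..
lemma PP_zero: "PP j i 0 = 0"
  by (auto simp: PP_def offp_def yp_def wed_def fun_eq_iff)
lemma Q_zero: "wed j (yp j 0) = 0"
  by (auto simp: yp_def wed_def fun_eq_iff)

lemma with_onh: "b \<in> ext_pow_with n k h \<Longrightarrow> onh h b"
  by (auto simp: ext_pow_with_def ewedge_basis onh_wed_h)

lemma onh_with:
  assumes "b \<in> ext_pow n k" "onh h b"
  shows "b \<in> ext_pow_with n k h"
proof -
  have "offp h b = 0" using assms(2) by (auto simp: onh_def offp_def fun_eq_iff)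
  then have "b = wed h (yp h b)" using decomp_ex[OF assms(1), of h] by simp
  then show ?thesis using yp_in[OF assms(1), of h] by (auto simp: ext_pow_with_def ewedge_basis)
qed

lemma sub_off: "E.subspace {X. X \<in> ext_pow n k \<and> offh h X}"
proof (rule E.subspaceI)
  show "0 \<in> {X. X \<in> ext_pow n k \<and> offh h X}" using ep_zero by (simp add: offh_def)
  show "x + y \<in> {X. X \<in> ext_pow n k \<and> offh h X}" if "x \<in> {X. X \<in> ext_pow n k \<and> offh h X}" "y \<in> {X. X \<in> ext_pow n k \<and> offh h X}" for x y
    using that ep_add offh_add by blast
  show "esc c x \<in> {X. X \<in> ext_pow n k \<and> offh h X}" if "x \<in> {X. X \<in> ext_pow n k \<and> offh h X}" for c x
    using that ep_esc offh_esc by blast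
qed
lemma sub_on: "E.subspace {X. X \<in> ext_pow n k \<and> onh h X}"
proof (rule E.subspaceI)
  show "0 \<in> {X. X \<in> ext_pow n k \<and> onh h X}" using ep_zero by (simp add: onh_def)
  show "x + y \<in> {X. X \<in> ext_pow n k \<and> onh h X}" if "x \<in> {X. X \<in> ext_pow n k \<and> onh h X}" "y \<in> {X. X \<in> ext_pow n k \<and> onh h X}" for x y
    using that ep_add onh_add by blast
  show "esc c x \<in> {X. X \<in> ext_pow n k \<and> onh h X}" if "x \<in> {X. X \<in> ext_pow n k \<and> onh h X}" for c x
    using that ep_esc onh_esc by blast
qed

theorem lemma3p4:
  fixes L :: "'a::field ext set" and n k h i j :: nat
  assumes char: "(2::'a) \<noteq> 0"
    and subL: "esubspace L" and Lk: "L \<subseteq> ext_pow n k"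
    and h: "h \<in> {1..n}"
    and mono: "is_dsum L (L \<inter> ext_pow_off n k h) (L \<inter> ext_pow_with n k h)"
    and ij: "1 \<le> i" "i < j" "j \<le> n" "i \<noteq> h" "j \<noteq> h"
  shows "is_dsum (slow_shift n k j i L)
           (slow_shift n k j i (L \<inter> ext_pow_off n k h))
           (slow_shift n k j i (L \<inter> ext_pow_with n k h))
       \<and> is_dsum (slow_shift n k j i L)
           (slow_shift n k j i L \<inter> ext_pow_off n k h)
           (slow_shift n k j i L \<inter> ext_pow_with n k h)"
proof -
  define A where "A = L \<inter> ext_pow_off n k h"
  define B where "B = L \<inter> ext_pow_with n k h"
  define N where "N = (slow_shift_el n k j i :: 'a ext \<Rightarrow> 'a ext)"
  define NL where "NL = slow_shift n k j i L"
  define NA where "NA = slow_shift n k j i A"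
  define NB where "NB = slow_shift n k j i B"
  have NL_def': "NL = E.span (N ` (L - {0}))" by (simp add: NL_def slow_shift_def espan_def N_def)
  have NA_def': "NA = E.span (N ` (A - {0}))" by (simp add: NA_def slow_shift_def espan_def N_def)
  have NB_def': "NB = E.span (N ` (B - {0}))" by (simp add: NB_def slow_shift_def espan_def N_def)
  have iin: "i \<in> {1..n}" and jin: "j \<in> {1..n}" using ij by auto
  have Aprop: "a \<in> ext_pow n k \<and> offh h a" if "a \<in> A" for a
    using that Lk by (auto simp: A_def ext_pow_off_def offh_def)
  have Bprop: "b \<in> ext_pow n k \<and> onh h b" if "b \<in> B" for b
    using that Lk by (auto simp: B_def with_onh)
  have Nm: "N m = PP j i m \<or> N m = wed j (yp j m)" if "m \<in> ext_pow n k" for m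
    using sse_eq[OF that] by (simp add: N_def)
  have Nep: "N m \<in> ext_pow n k" if "m \<in> ext_pow n k" for m
    using Nm[OF that] ep_add[OF ep_offp[OF that] ep_wed[OF that iin]] ep_wed[OF that jin]
    by (auto simp: PP_def)
  have NA_sub: "NA \<subseteq> {X. X \<in> ext_pow n k \<and> offh h X}"
    unfolding NA_def'
  proof (rule E.span_minimal[OF _ sub_off])
    show "N ` (A - {0}) \<subseteq> {X. X \<in> ext_pow n k \<and> offh h X}"
    proof
      fix x assume "x \<in> N ` (A - {0})"
      then obtain a where a: "a \<in> A" "x = N a" by auto
      have "offh h (PP j i a)" "offh h (wed j (yp j a))"
        using Aprop[OF a(1)] ij
        by (auto simp: PP_def intro!: offh_add offh_offp offh_wed offh_yp)
      then show "x \<in> {X. X \<in> ext_pow n k \<and> offh h X}"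
        using Nm[of a] Nep[of a] Aprop[OF a(1)] a(2) by auto
    qed
  qed
  have NB_sub: "NB \<subseteq> {X. X \<in> ext_pow n k \<and> onh h X}"
    unfolding NB_def'
  proof (rule E.span_minimal[OF _ sub_on])
    show "N ` (B - {0}) \<subseteq> {X. X \<in> ext_pow n k \<and> onh h X}"
    proof
      fix x assume "x \<in> N ` (B - {0})"
      then obtain b where b: "b \<in> B" "x = N b" by auto
      have "onh h (PP j i b)" "onh h (wed j (yp j b))"
        using Bprop[OF b(1)] ij
        by (auto simp: PP_def intro!: onh_add onh_offp onh_wed onh_yp)
      then show "x \<in> {X. X \<in> ext_pow n k \<and> onh h X}"
        using Nm[of b] Nep[of b] Bprop[OF b(1)] b(2) by auto
    qed
  qed
  have NA_NL: "NA \<subseteq> NL" unfolding NA_def' NL_def' by (rule E.span_mono) (auto simp: A_def)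
  have NB_NL: "NB \<subseteq> NL" unfolding NB_def' NL_def' by (rule E.span_mono) (auto simp: B_def)
  define SU where "SU = {a + b | a b. a \<in> NA \<and> b \<in> NB}"
  have subSU: "E.subspace SU"
  proof (rule E.subspaceI)
    have z: "(0::'a ext) \<in> NA" "(0::'a ext) \<in> NB" by (simp_all add: NA_def' NB_def' E.span_zero)
    have "(0::'a ext) = 0 + 0" by simp
    then show "0 \<in> SU" unfolding SU_def using z by blast
    fix x y assume "x \<in> SU" "y \<in> SU"
    then obtain a b a' b' where "x = a + b" "y = a' + b'" "a \<in> NA" "b \<in> NB" "a' \<in> NA" "b' \<in> NB"
      by (auto simp: SU_def)
    then show "x + y \<in> SU" unfolding SU_def NA_def' NB_def'
      by (intro CollectI exI[of _ "a + a'"] exI[of _ "b + b'"]) (auto simp: E.span_add algebra_simps)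
  next
    fix c x assume "x \<in> SU"
    then obtain a b where "x = a + b" "a \<in> NA" "b \<in> NB" by (auto simp: SU_def)
    then show "esc c x \<in> SU" unfolding SU_def NA_def' NB_def'
      by (intro CollectI exI[of _ "esc c a"] exI[of _ "esc c b"]) (auto simp: E.span_scale E.scale_right_distrib)
  qed
  have PA: "PP j i a \<in> NA" if "a \<in> A" for a
  proof (cases "PP j i a = 0")
    case True then show ?thesis by (simp add: NA_def' E.span_zero)
  next
    case False
    then have "a \<noteq> 0" using PP_zero by metis
    moreover have eqN: "N a = PP j i a" using False sse_eq[of a n k j i] Aprop[OF that] by (simp add: N_def)
    ultimately have "N a \<in> N ` (A - {0})" using that by blast
    then show ?thesis unfolding NA_def' using eqN by (metis E.span_base)
  qed
  have PB: "PP j i b \<in> NB" if "b \<in> B" for b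
  proof (cases "PP j i b = 0")
    case True then show ?thesis by (simp add: NB_def' E.span_zero)
  next
    case False
    then have "b \<noteq> 0" using PP_zero by metis
    moreover have eqN: "N b = PP j i b" using False sse_eq[of b n k j i] Bprop[OF that] by (simp add: N_def)
    ultimately have "N b \<in> N ` (B - {0})" using that by blast
    then show ?thesis unfolding NB_def' using eqN by (metis E.span_base)
  qed
  have QA: "wed j (yp j a) \<in> NA" if "a \<in> A" "PP j i a = 0" for a
  proof (cases "a = 0")
    case True then show ?thesis using Q_zero by (metis NA_def' E.span_zero)
  next
    case False
    moreover have eqN: "N a = wed j (yp j a)" using that sse_eq[of a n k j i] Aprop[OF that(1)] by (simp add: N_def)
    ultimately have "N a \<in> N ` (A - {0})" using that by blast
    then show ?thesis unfolding NA_def' using eqN by (metis E.span_base)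
  qed
  have QB: "wed j (yp j b) \<in> NB" if "b \<in> B" "PP j i b = 0" for b
  proof (cases "b = 0")
    case True then show ?thesis using Q_zero by (metis NB_def' E.span_zero)
  next
    case False
    moreover have eqN: "N b = wed j (yp j b)" using that sse_eq[of b n k j i] Bprop[OF that(1)] by (simp add: N_def)
    ultimately have "N b \<in> N ` (B - {0})" using that by blast
    then show ?thesis unfolding NB_def' using eqN by (metis E.span_base)
  qed
  have NL_SU: "NL \<subseteq> SU" unfolding NL_def'
  proof (rule E.span_minimal[OF _ subSU])
    show "N ` (L - {0}) \<subseteq> SU"
    proof
      fix x assume "x \<in> N ` (L - {0})"
      then obtain m where m: "m \<in> L" "x = N m" by auto
      have LAB: "L = {a + b | a b. a \<in> A \<and> b \<in> B}" using mono by (simp add: is_dsum_def A_def B_def)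
      obtain a b where ab: "m = a + b" "a \<in> A" "b \<in> B"
        using m(1) by (subst (asm) LAB) blast
      have mep: "m \<in> ext_pow n k" using m(1) Lk by auto
      show "x \<in> SU"
      proof (cases "PP j i m = 0")
        case False
        then have "x = PP j i a + PP j i b" using sse_eq[OF mep, of j i] m(2) ab(1) PP_add by (simp add: N_def)
        then show ?thesis using PA[OF ab(2)] PB[OF ab(3)] by (auto simp: SU_def)
      next
        case True
        have oa: "offh h (PP j i a)" using Aprop[OF ab(2)] ij
          by (auto simp: PP_def intro!: offh_add offh_offp offh_wed offh_yp)
        have ob: "onh h (PP j i b)" using Bprop[OF ab(3)] ij
          by (auto simp: PP_def intro!: onh_add onh_offp onh_wed onh_yp)
        have "PP j i a = - PP j i b" unfolding eq_neg_iff_add_eq_0 using True ab(1) by (simp add: PP_add)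
        then have "onh h (PP j i a)" using ob by (auto simp: onh_def)
        then have a0: "PP j i a = 0" using oa offh_onh by blast
        then have b0: "PP j i b = 0" using True ab(1) by (simp add: PP_add)
        have "x = wed j (yp j a) + wed j (yp j b)" using sse_eq[OF mep, of j i] True m(2) ab(1) Q_add by (simp add: N_def)
        then show ?thesis using QA[OF ab(2) a0] QB[OF ab(3) b0] by (auto simp: SU_def)
      qed
    qed
  qed
  have SU_NL: "SU \<subseteq> NL"
  proof
    fix x assume "x \<in> SU"
    then obtain a b where "x = a + b" "a \<in> NA" "b \<in> NB" by (auto simp: SU_def)
    then show "x \<in> NL" using NA_NL NB_NL unfolding NL_def' by (auto intro: E.span_add)
  qed
  have inter: "NA \<inter> NB = {0}"
  proof
    show "NA \<inter> NB \<subseteq> {0}" using NA_sub NB_sub offh_onh by blast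
    show "{0} \<subseteq> NA \<inter> NB" by (simp add: NA_def' NB_def' E.span_zero)
  qed
  have NLSU: "NL = SU" using NL_SU SU_NL by (rule subset_antisym)
  have d1: "is_dsum NL NA NB" unfolding is_dsum_def NLSU SU_def using inter by (rule conjI[OF refl])
  have eqA: "NL \<inter> ext_pow_off n k h = NA"
  proof
    show "NA \<subseteq> NL \<inter> ext_pow_off n k h" using NA_NL NA_sub by (auto simp: ext_pow_off_def offh_def)
    show "NL \<inter> ext_pow_off n k h \<subseteq> NA"
    proof
      fix x assume x: "x \<in> NL \<inter> ext_pow_off n k h"
      then obtain a b where ab: "x = a + b" "a \<in> NA" "b \<in> NB" using NL_SU by (auto simp: SU_def)
      have "offh h x" using x by (auto simp: ext_pow_off_def offh_def)
      moreover have "offh h a" "onh h b" using ab NA_sub NB_sub by auto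
      moreover have "b = x + (- a)" using ab(1) by (simp add: algebra_simps)
      moreover have "offh h (- a)" using \<open>offh h a\<close> by (auto simp: offh_def)
      ultimately have "offh h b" using offh_add[of h x "- a"] by simp
      then have "b = 0" using \<open>onh h b\<close> offh_onh by blast
      then show "x \<in> NA" using ab by simp
    qed
  qed
  have eqB: "NL \<inter> ext_pow_with n k h = NB"
  proof
    show "NB \<subseteq> NL \<inter> ext_pow_with n k h" using NB_NL NB_sub onh_with by blast
    show "NL \<inter> ext_pow_with n k h \<subseteq> NB"
    proof
      fix x assume x: "x \<in> NL \<inter> ext_pow_with n k h"
      then obtain a b where ab: "x = a + b" "a \<in> NA" "b \<in> NB" using NL_SU by (auto simp: SU_def)
      have "onh h x" using x with_onh by blast
      moreover have "offh h a" "onh h b" using ab NA_sub NB_sub by auto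
      moreover have "a = x + (- b)" using ab(1) by (simp add: algebra_simps)
      moreover have "onh h (- b)" using \<open>onh h b\<close> by (auto simp: onh_def)
      ultimately have "onh h a" using onh_add[of h x "- b"] by simp
      then have "a = 0" using \<open>offh h a\<close> offh_onh by blast
      then show "x \<in> NB" using ab by simp
    qed
  qed
  have d2: "is_dsum NL (NL \<inter> ext_pow_off n k h) (NL \<inter> ext_pow_with n k h)"
    unfolding eqA eqB by (rule d1)
  show ?thesis unfolding A_def[symmetric] B_def[symmetric]
    unfolding NA_def[symmetric] NB_def[symmetric] NL_def[symmetric] using d1 d2 by (rule conjI)
qed

end
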